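(* Let $\Gamma$ be a finite multiset of formulas and $G$ a formula such that the sequent $G\supset\bot,\Gamma\longrightarrow G$ has an $\mathbf{I}$-proof in which no $\forall$-L and no $\supset$-R rules are used. Then there is an $\mathbf{I}_G$-proof of $\Gamma\longrightarrow G$ in which no $\forall$-L and no $\supset$-R rules are used.
   Context: Formulas are first-order formulas built from atomic formulas and the logical constants $\top$, $\bot$ (not counted as atomic) using $\land,\lor,\supset,\forall,\exists$; $B[t/x]$ is capture-avoiding substitution of term $t$ for free $x$ in $B$. A sequent $\Gamma\longrightarrow\Delta$ is a pair of finite multisets of formulas; $B,\Gamma$ denotes $\Gamma$ with an extra occurrence of $B$. A sequent is an axiom if $\top\in\Delta$ or some formula that is $\bot$ or atomic occurs in both $\Gamma$ and $\Delta$. Writing premises $\Rightarrow$ conclusion, the rules are all instances of: contr-L: $B,B,\Gamma\longrightarrow\Delta\Rightarrow B,\Gamma\longrightarrow\Delta$; contr-R: $\Gamma\longrightarrow\Delta,B,B\Rightarrow\Gamma\longrightarrow\Delta,B$; $\bot$-R: $\Gamma\longrightarrow\Delta,\bot\Rightarrow\Gamma\longrightarrow\Delta,D$; $\land$-L: $B,\Gamma\longrightarrow\Delta\Rightarrow B\land D,\Gamma\longrightarrow\Delta$ and $D,\Gamma\longrightarrow\Delta\Rightarrow B\land D,\Gamma\longrightarrow\Delta$; $\lor$-L: $B,\Gamma\longrightarrow\Delta$ and $D,\Gamma\longrightarrow\Delta\Rightarrow B\lor D,\Gamma\longrightarrow\Delta$; $\land$-R: $\Gamma\longrightarrow\Delta,B$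 and $\Gamma\longrightarrow\Delta,D\Rightarrow\Gamma\longrightarrow\Delta,B\land D$; $\lor$-R: $\Gamma\longrightarrow\Delta,B\Rightarrow\Gamma\longrightarrow\Delta,B\lor D$ and $\Gamma\longrightarrow\Delta,D\Rightarrow\Gamma\longrightarrow\Delta,B\lor D$; $\supset$-L: $\Gamma\longrightarrow\Delta,B$ and $D,\Gamma\longrightarrow\Theta\Rightarrow B\supset D,\Gamma\longrightarrow\Delta,\Theta$; $\supset$-R: $B,\Gamma\longrightarrow\Delta,D\Rightarrow\Gamma\longrightarrow\Delta,B\supset D$; $\forall$-L: $B[t/x],\Gamma\longrightarrow\Delta\Rightarrow\forall x B,\Gamma\longrightarrow\Delta$; $\exists$-R: $\Gamma\longrightarrow\Delta,B[t/x]\Rightarrow\Gamma\longrightarrow\Delta,\exists x B$ ($t$ any term); $\exists$-L: $B[c/x],\Gamma\longrightarrow\Delta\Rightarrow\exists x B,\Gamma\longrightarrow\Delta$; $\forall$-R: $\Gamma\longrightarrow\Delta,B[c/x]\Rightarrow\Gamma\longrightarrow\Delta,\forall x B$, where the constant $c$ does not occur in the conclusion. A $\mathbf{C}$-proof is a finite tree of sequents with axioms at the leaves, each internal node being the conclusion of a rule instance whose premises are its children. An $\mathbf{I}$-proof is a $\mathbf{C}$-proof in which every sequent has exactly one formula in its succedent. For a fixed formula $G$, an $\mathbf{I}_G$-proof is a derivation, all of whose sequents have exactly one succedent formula and whose leaves are axioms, built with the rules available for $\mathbf{I}$-proofs except that: the $\lor$-L rule is removed; the constant $c$ in $\exists$-L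 and $\forall$-R must additionally not occur in $G$; and the following two rules are added ($F$ any formula, $\Delta$ any multiset): $\lor$-L$_G$: $B,\Delta\longrightarrow F$ and $D,\Delta\longrightarrow G\ \Rightarrow\ B\lor D,\Delta\longrightarrow F$; res$_G$: $\Delta\longrightarrow G\ \Rightarrow\ \Delta\longrightarrow F$. A rule "is used" if some instance of that schema occurs in the proof. *)

theory Defs
  imports Main "HOL-Library.Multiset"
begin

text \<open>Terms: variables (de Bruijn indices; loose indices are free variables) and
  function applications; a constant is a 0-ary function symbol.\<close>
datatype tm = Var nat | Fn string "tm list"

text \<open>Formulas. Top and Bot are logical constants (not atomic).
  All B / Ex B bind de Bruijn index 0 in B.\<close>
datatype fm = Atom string "tm list" | Top | Bot
  | And fm fm | Or fm fm | Imp fm fm | All fm | Ex fm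

primrec is_atom :: "fm \<Rightarrow> bool" where
  "is_atom (Atom p ts) = True" | "is_atom Top = False" | "is_atom Bot = False"
| "is_atom (And a b) = False" | "is_atom (Or a b) = False" | "is_atom (Imp a b) = False"
| "is_atom (All a) = False" | "is_atom (Ex a) = False"

fun lift_tm :: "nat \<Rightarrow> tm \<Rightarrow> tm" where
  "lift_tm k (Var i) = (if i < k then Var i else Var (Suc i))"
| "lift_tm k (Fn f ts) = Fn f (map (lift_tm k) ts)"

text \<open>Substitution of s for index k (indices above k are decremented, since the binder disappears).\<close>
fun subst_tm :: "nat \<Rightarrow> tm \<Rightarrow> tm \<Rightarrow> tm" where
  "subst_tm k s (Var i) = (if i < k then Var i else if i = k then s else Var (i - 1))"
| "subst_tm k s (Fn f ts) = Fn f (map (subst_tm k s) ts)"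

primrec subst_fm :: "nat \<Rightarrow> tm \<Rightarrow> fm \<Rightarrow> fm" where
  "subst_fm k s (Atom p ts) = Atom p (map (subst_tm k s) ts)"
| "subst_fm k s Top = Top"
| "subst_fm k s Bot = Bot"
| "subst_fm k s (And a b) = And (subst_fm k s a) (subst_fm k s b)"
| "subst_fm k s (Or a b) = Or (subst_fm k s a) (subst_fm k s b)"
| "subst_fm k s (Imp a b) = Imp (subst_fm k s a) (subst_fm k s b)"
| "subst_fm k s (All a) = All (subst_fm (Suc k) (lift_tm 0 s) a)"
| "subst_fm k s (Ex a) = Ex (subst_fm (Suc k) (lift_tm 0 s) a)"

text \<open>B[t/x] where x is the variable bound by the quantifier whose body is B.\<close>
definition inst :: "fm \<Rightarrow> tm \<Rightarrow> fm" where
  "inst B t = subst_fm 0 t B"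

fun consts_tm :: "tm \<Rightarrow> string set" where
  "consts_tm (Var i) = {}"
| "consts_tm (Fn f ts) = (if ts = [] then {f} else {}) \<union> \<Union> (set (map consts_tm ts))"

primrec consts_fm :: "fm \<Rightarrow> string set" where
  "consts_fm (Atom p ts) = \<Union> (set (map consts_tm ts))"
| "consts_fm Top = {}"
| "consts_fm Bot = {}"
| "consts_fm (And a b) = consts_fm a \<union> consts_fm b"
| "consts_fm (Or a b) = consts_fm a \<union> consts_fm b"
| "consts_fm (Imp a b) = consts_fm a \<union> consts_fm b"
| "consts_fm (All a) = consts_fm a"
| "consts_fm (Ex a) = consts_fm a"

definition consts_ms :: "fm multiset \<Rightarrow> string set" where
  "consts_ms \<Gamma> = \<Union> (consts_fm ` set_mset \<Gamma>)"

definition axiom1 :: "fm multiset \<Rightarrow> fm \<Rightarrow> bool" where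
  "axiom1 \<Gamma> F \<longleftrightarrow> F = Top \<or> ((F = Bot \<or> is_atom F) \<and> F \<in># \<Gamma>)"

datatype rule = ContrL | BotR | AndL | OrL | AndR | OrR | ImpL | ImpR | AllL | ExR | ExL | AllR
  | OrLG | ResG

text \<open>\<open>Iprf Rs \<Gamma> F\<close>: there is an I-proof of \<open>\<Gamma> \<longrightarrow> F\<close> using only rules whose label is in \<open>Rs\<close>.
  (In an I-proof every sequent has one succedent formula, so contr-R can never be applied and
  the succedent context \<open>\<Delta>\<close> of \<open>\<bottom>\<close>-R, \<open>\<supset>\<close>-L is empty.)\<close>
inductive Iprf :: "rule set \<Rightarrow> fm multiset \<Rightarrow> fm \<Rightarrow> bool" for Rs where
  ax: "axiom1 \<Gamma> F \<Longrightarrow> Iprf Rs \<Gamma> F"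
| contrL: "ContrL \<in> Rs \<Longrightarrow> Iprf Rs (add_mset B (add_mset B \<Gamma>)) F \<Longrightarrow> Iprf Rs (add_mset B \<Gamma>) F"
| botR: "BotR \<in> Rs \<Longrightarrow> Iprf Rs \<Gamma> Bot \<Longrightarrow> Iprf Rs \<Gamma> D"
| andL1: "AndL \<in> Rs \<Longrightarrow> Iprf Rs (add_mset B \<Gamma>) F \<Longrightarrow> Iprf Rs (add_mset (And B D) \<Gamma>) F"
| andL2: "AndL \<in> Rs \<Longrightarrow> Iprf Rs (add_mset D \<Gamma>) F \<Longrightarrow> Iprf Rs (add_mset (And B D) \<Gamma>) F"
| orL: "OrL \<in> Rs \<Longrightarrow> Iprf Rs (add_mset B \<Gamma>) F \<Longrightarrow> Iprf Rs (add_mset D \<Gamma>) F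
        \<Longrightarrow> Iprf Rs (add_mset (Or B D) \<Gamma>) F"
| andR: "AndR \<in> Rs \<Longrightarrow> Iprf Rs \<Gamma> B \<Longrightarrow> Iprf Rs \<Gamma> D \<Longrightarrow> Iprf Rs \<Gamma> (And B D)"
| orR1: "OrR \<in> Rs \<Longrightarrow> Iprf Rs \<Gamma> B \<Longrightarrow> Iprf Rs \<Gamma> (Or B D)"
| orR2: "OrR \<in> Rs \<Longrightarrow> Iprf Rs \<Gamma> D \<Longrightarrow> Iprf Rs \<Gamma> (Or B D)"
| impL: "ImpL \<in> Rs \<Longrightarrow> Iprf Rs \<Gamma> B \<Longrightarrow> Iprf Rs (add_mset D \<Gamma>) E
        \<Longrightarrow> Iprf Rs (add_mset (Imp B D) \<Gamma>) E"
| impR: "ImpR \<in> Rs \<Longrightarrow> Iprf Rs (add_mset B \<Gamma>) D \<Longrightarrow> Iprf Rs \<Gamma> (Imp B D)"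
| allL: "AllL \<in> Rs \<Longrightarrow> Iprf Rs (add_mset (inst B t) \<Gamma>) F \<Longrightarrow> Iprf Rs (add_mset (All B) \<Gamma>) F"
| exR: "ExR \<in> Rs \<Longrightarrow> Iprf Rs \<Gamma> (inst B t) \<Longrightarrow> Iprf Rs \<Gamma> (Ex B)"
| exL: "ExL \<in> Rs \<Longrightarrow> c \<notin> consts_ms (add_mset (Ex B) \<Gamma>) \<Longrightarrow> c \<notin> consts_fm F
        \<Longrightarrow> Iprf Rs (add_mset (inst B (Fn c [])) \<Gamma>) F \<Longrightarrow> Iprf Rs (add_mset (Ex B) \<Gamma>) F"
| allR: "AllR \<in> Rs \<Longrightarrow> c \<notin> consts_ms \<Gamma> \<Longrightarrow> c \<notin> consts_fm (All B)
        \<Longrightarrow> Iprf Rs \<Gamma> (inst B (Fn c [])) \<Longrightarrow> Iprf Rs \<Gamma> (All B)"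

inductive IGprf :: "fm \<Rightarrow> rule set \<Rightarrow> fm multiset \<Rightarrow> fm \<Rightarrow> bool" for G Rs where
  ax: "axiom1 \<Gamma> F \<Longrightarrow> IGprf G Rs \<Gamma> F"
| contrL: "ContrL \<in> Rs \<Longrightarrow> IGprf G Rs (add_mset B (add_mset B \<Gamma>)) F \<Longrightarrow> IGprf G Rs (add_mset B \<Gamma>) F"
| botR: "BotR \<in> Rs \<Longrightarrow> IGprf G Rs \<Gamma> Bot \<Longrightarrow> IGprf G Rs \<Gamma> D"
| andL1: "AndL \<in> Rs \<Longrightarrow> IGprf G Rs (add_mset B \<Gamma>) F \<Longrightarrow> IGprf G Rs (add_mset (And B D) \<Gamma>) F"
| andL2: "AndL \<in> Rs \<Longrightarrow> IGprf G Rs (add_mset D \<Gamma>) F \<Longrightarrow> IGprf G Rs (add_mset (And B D) \<Gamma>) F"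
| andR: "AndR \<in> Rs \<Longrightarrow> IGprf G Rs \<Gamma> B \<Longrightarrow> IGprf G Rs \<Gamma> D \<Longrightarrow> IGprf G Rs \<Gamma> (And B D)"
| orR1: "OrR \<in> Rs \<Longrightarrow> IGprf G Rs \<Gamma> B \<Longrightarrow> IGprf G Rs \<Gamma> (Or B D)"
| orR2: "OrR \<in> Rs \<Longrightarrow> IGprf G Rs \<Gamma> D \<Longrightarrow> IGprf G Rs \<Gamma> (Or B D)"
| impL: "ImpL \<in> Rs \<Longrightarrow> IGprf G Rs \<Gamma> B \<Longrightarrow> IGprf G Rs (add_mset D \<Gamma>) E
        \<Longrightarrow> IGprf G Rs (add_mset (Imp B D) \<Gamma>) E"
| impR: "ImpR \<in> Rs \<Longrightarrow> IGprf G Rs (add_mset B \<Gamma>) D \<Longrightarrow> IGprf G Rs \<Gamma> (Imp B D)"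
| allL: "AllL \<in> Rs \<Longrightarrow> IGprf G Rs (add_mset (inst B t) \<Gamma>) F \<Longrightarrow> IGprf G Rs (add_mset (All B) \<Gamma>) F"
| exR: "ExR \<in> Rs \<Longrightarrow> IGprf G Rs \<Gamma> (inst B t) \<Longrightarrow> IGprf G Rs \<Gamma> (Ex B)"
| exL: "ExL \<in> Rs \<Longrightarrow> c \<notin> consts_ms (add_mset (Ex B) \<Gamma>) \<Longrightarrow> c \<notin> consts_fm F \<Longrightarrow> c \<notin> consts_fm G
        \<Longrightarrow> IGprf G Rs (add_mset (inst B (Fn c [])) \<Gamma>) F \<Longrightarrow> IGprf G Rs (add_mset (Ex B) \<Gamma>) F"
| allR: "AllR \<in> Rs \<Longrightarrow> c \<notin> consts_ms \<Gamma> \<Longrightarrow> c \<notin> consts_fm (All B) \<Longrightarrow> c \<notin> consts_fm G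
        \<Longrightarrow> IGprf G Rs \<Gamma> (inst B (Fn c [])) \<Longrightarrow> IGprf G Rs \<Gamma> (All B)"
| orLG: "OrLG \<in> Rs \<Longrightarrow> IGprf G Rs (add_mset B \<Delta>) F \<Longrightarrow> IGprf G Rs (add_mset D \<Delta>) G
        \<Longrightarrow> IGprf G Rs (add_mset (Or B D) \<Delta>) F"
| resG: "ResG \<in> Rs \<Longrightarrow> IGprf G Rs \<Delta> G \<Longrightarrow> IGprf G Rs \<Delta> F"

end

theory Submission
  imports Defs
begin

fun ren_tm :: "(string \<Rightarrow> string) \<Rightarrow> tm \<Rightarrow> tm" where
  "ren_tm p (Var i) = Var i"
| "ren_tm p (Fn f ts) = Fn (if ts = [] then p f else f) (map (ren_tm p) ts)"

primrec ren_fm :: "(string \<Rightarrow> string) \<Rightarrow> fm \<Rightarrow> fm" where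
  "ren_fm p (Atom q ts) = Atom q (map (ren_tm p) ts)"
| "ren_fm p Top = Top"
| "ren_fm p Bot = Bot"
| "ren_fm p (And a b) = And (ren_fm p a) (ren_fm p b)"
| "ren_fm p (Or a b) = Or (ren_fm p a) (ren_fm p b)"
| "ren_fm p (Imp a b) = Imp (ren_fm p a) (ren_fm p b)"
| "ren_fm p (All a) = All (ren_fm p a)"
| "ren_fm p (Ex a) = Ex (ren_fm p a)"

lemma ren_lift: "ren_tm p (lift_tm k t) = lift_tm k (ren_tm p t)"
  by (induction t) auto

lemma ren_subst_tm: "ren_tm p (subst_tm k s t) = subst_tm k (ren_tm p s) (ren_tm p t)"
  by (induction t) auto

lemma ren_subst_fm: "ren_fm p (subst_fm k s B) = subst_fm k (ren_tm p s) (ren_fm p B)"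
  by (induction B arbitrary: k s) (auto simp: ren_subst_tm ren_lift)

lemma ren_inst: "ren_fm p (inst B t) = inst (ren_fm p B) (ren_tm p t)"
  by (simp add: inst_def ren_subst_fm)

lemma consts_ren_tm: "consts_tm (ren_tm p t) = p ` consts_tm t"
  by (induction t) (auto simp: image_Union)

lemma consts_ren_fm: "consts_fm (ren_fm p B) = p ` consts_fm B"
  by (induction B) (auto simp: consts_ren_tm image_Union)

lemma ren_cong_tm: "(\<And>x. x \<in> consts_tm t \<Longrightarrow> p x = q x) \<Longrightarrow> ren_tm p t = ren_tm q t"
  by (induction t) auto

lemma ren_cong_fm: "(\<And>x. x \<in> consts_fm B \<Longrightarrow> p x = q x) \<Longrightarrow> ren_fm p B = ren_fm q B"
  by (induction B) (auto intro!: ren_cong_tm)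

lemma ren_comp_tm: "ren_tm p (ren_tm q t) = ren_tm (p \<circ> q) t"
  by (induction t) auto

lemma ren_comp_fm: "ren_fm p (ren_fm q B) = ren_fm (p \<circ> q) B"
  by (induction B) (auto simp: ren_comp_tm comp_def)

lemma ren_id_tm: "ren_tm (\<lambda>x. x) t = t"
  by (induction t) (auto simp: map_idI)

lemma ren_id_fm: "ren_fm (\<lambda>x. x) B = B"
  by (induction B) (auto simp: ren_id_tm map_idI)

lemma is_atom_ren: "is_atom (ren_fm p B) = is_atom B"
  by (cases B) auto

lemma consts_lift: "consts_tm (lift_tm k t) = consts_tm t"
  by (induction t) auto

lemma consts_subst_tm: "consts_tm (subst_tm k s t) \<subseteq> consts_tm t \<union> consts_tm s"
  by (induction t) auto

lemma consts_subst_fm: "consts_fm (subst_fm k s B) \<subseteq> consts_fm B \<union> consts_tm s"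
proof (induction B arbitrary: k s)
  case (Atom x1 x2)
  then show ?case using consts_subst_tm by fastforce
next
  case (All B)
  then show ?case using All.IH[of "Suc k" "lift_tm 0 s"] by (simp add: consts_lift)
next
  case (Ex B)
  then show ?case using Ex.IH[of "Suc k" "lift_tm 0 s"] by (simp add: consts_lift)
qed (auto; fastforce)+

lemma consts_inst: "consts_fm (inst B t) \<subseteq> consts_fm B \<union> consts_tm t"
  by (simp add: inst_def consts_subst_fm)

lemma finite_consts_tm: "finite (consts_tm t)"
  by (induction t) auto

lemma finite_consts_fm: "finite (consts_fm B)"
  by (induction B) (auto simp: finite_consts_tm)

lemma finite_consts_ms: "finite (consts_ms S)"
  by (simp add: consts_ms_def finite_consts_fm)


definition swp :: "string \<Rightarrow> string \<Rightarrow> string \<Rightarrow> string" where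
  "swp a b x = (if x = a then b else if x = b then a else x)"

lemma swp_swp: "swp a b (swp a b x) = x"
  by (simp add: swp_def)

lemma inj_swp: "inj (swp a b)"
  by (metis injI swp_swp)

lemma fresh: "finite (X::string set) \<Longrightarrow> \<exists>d. d \<notin> X"
  by (metis ex_new_if_finite infinite_UNIV_listI)

lemma consts_ms_add[simp]: "consts_ms (add_mset X S) = consts_fm X \<union> consts_ms S"
  by (simp add: consts_ms_def)

lemma consts_ms_union[simp]: "consts_ms (S + T) = consts_ms S \<union> consts_ms T"
  by (simp add: consts_ms_def)

lemma consts_ms_ren: "consts_ms (image_mset (ren_fm p) S) = p ` consts_ms S"
  by (auto simp: consts_ms_def consts_ren_fm)

lemma consts_ms_mem: "X \<in># S \<Longrightarrow> consts_fm X \<subseteq> consts_ms S"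
  by (auto simp: consts_ms_def)

lemma consts_ms_mono: "S \<subseteq># T \<Longrightarrow> consts_ms S \<subseteq> consts_ms T"
  by (auto simp: consts_ms_def dest: mset_subset_eqD)

lemma ren_fix_fm: "(\<And>x. x \<in> consts_fm B \<Longrightarrow> p x = x) \<Longrightarrow> ren_fm p B = B"
  using ren_cong_fm[of B p "\<lambda>x. x"] ren_id_fm by simp

lemma image_ren_fix: "(\<And>x. x \<in> consts_ms S \<Longrightarrow> p x = x) \<Longrightarrow> image_mset (ren_fm p) S = S"
proof -
  assume a: "\<And>x. x \<in> consts_ms S \<Longrightarrow> p x = x"
  have "image_mset (ren_fm p) S = image_mset (\<lambda>x. x) S"
    by (rule image_mset_cong) (use a in \<open>auto simp: consts_ms_def intro!: ren_fix_fm\<close>)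
  then show ?thesis by simp
qed

lemma ren_swp_twice: "ren_fm (swp a b) (ren_fm (swp a b) B) = B"
  by (simp add: ren_comp_fm comp_def swp_swp ren_id_fm)

lemma image_ren_swp_twice: "image_mset (ren_fm (swp a b)) (image_mset (ren_fm (swp a b)) S) = S"
  by (simp add: multiset.map_comp comp_def ren_swp_twice)

lemma axiom1_ren: "axiom1 S F \<Longrightarrow> axiom1 (image_mset (ren_fm p) S) (ren_fm p F)"
  by (auto simp: axiom1_def is_atom_ren)

lemma IG_ren:
  assumes "IGprf G Rs S F" "inj p"
  shows "IGprf (ren_fm p G) Rs (image_mset (ren_fm p) S) (ren_fm p F)"
  using assms
proof (induction rule: IGprf.induct)
  case (ax \<Gamma> F)
  then show ?case by (simp add: IGprf.ax axiom1_ren)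
next
  case (exL c B \<Gamma> F)
  have "IGprf (ren_fm p G) Rs (add_mset (Ex (ren_fm p B)) (image_mset (ren_fm p) \<Gamma>)) (ren_fm p F)"
    apply (rule IGprf.exL[of _ "p c"])
    using exL by (auto simp: consts_ms_ren consts_ren_fm inj_image_mem_iff ren_inst)
  then show ?case by simp
next
  case (allR c \<Gamma> B)
  have "IGprf (ren_fm p G) Rs (image_mset (ren_fm p) \<Gamma>) (All (ren_fm p B))"
    apply (rule IGprf.allR[of _ "p c"])
    using allR by (auto simp: consts_ms_ren consts_ren_fm inj_image_mem_iff ren_inst)
  then show ?case by simp
qed (auto intro: IGprf.intros simp: ren_inst)


lemma swp_fix: "x \<noteq> a \<Longrightarrow> x \<noteq> b \<Longrightarrow> swp a b x = x"
  by (simp add: swp_def)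

lemma IG_weak:
  assumes "IGprf G Rs S F"
  shows "IGprf G Rs (S + T) F"
  using assms
proof (induction arbitrary: T rule: IGprf.induct)
  case (ax \<Gamma> F)
  then show ?case by (auto simp: axiom1_def intro!: IGprf.ax)
next
  case (exL c B \<Gamma> F)
  obtain d where d: "d \<notin> {c} \<union> consts_ms (add_mset (Ex B) \<Gamma> + T) \<union> consts_fm F \<union> consts_fm G"
    using fresh[of "{c} \<union> consts_ms (add_mset (Ex B) \<Gamma> + T) \<union> consts_fm F \<union> consts_fm G"]
    by (auto simp: finite_consts_ms finite_consts_fm)
  let ?t = "swp c d"
  have h: "IGprf G Rs (add_mset (inst B (Fn c [])) \<Gamma> + image_mset (ren_fm ?t) T) F"
    using exL.IH by blast
  have h2: "IGprf (ren_fm ?t G) Rs (image_mset (ren_fm ?t) (add_mset (inst B (Fn c [])) \<Gamma> + image_mset (ren_fm ?t) T)) (ren_fm ?t F)"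
    by (rule IG_ren[OF h inj_swp])
  have eG: "ren_fm ?t G = G" using d exL.hyps by (intro ren_fix_fm swp_fix) auto
  have eF: "ren_fm ?t F = F" using d exL.hyps by (intro ren_fix_fm swp_fix) auto
  have eB: "ren_fm ?t B = B" using d exL.hyps by (intro ren_fix_fm swp_fix) auto
  have eGa: "image_mset (ren_fm ?t) \<Gamma> = \<Gamma>" using d exL.hyps by (intro image_ren_fix swp_fix) auto
  have ei: "ren_fm ?t (inst B (Fn c [])) = inst B (Fn d [])"
    by (simp add: ren_inst eB swp_def)
  have "IGprf G Rs (add_mset (inst B (Fn d [])) (\<Gamma> + T)) F"
    using h2 by (simp add: eG eF eGa ei image_ren_swp_twice)
  then have "IGprf G Rs (add_mset (Ex B) (\<Gamma> + T)) F"
    by (rule IGprf.exL[rotated 4]) (use d exL.hyps in auto)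
  then show ?case by simp
next
  case (allR c \<Gamma> B)
  obtain d where d: "d \<notin> {c} \<union> consts_ms (\<Gamma> + T) \<union> consts_fm B \<union> consts_fm G"
    using fresh[of "{c} \<union> consts_ms (\<Gamma> + T) \<union> consts_fm B \<union> consts_fm G"]
    by (auto simp: finite_consts_ms finite_consts_fm)
  let ?t = "swp c d"
  have h: "IGprf G Rs (\<Gamma> + image_mset (ren_fm ?t) T) (inst B (Fn c []))"
    using allR.IH by blast
  have h2: "IGprf (ren_fm ?t G) Rs (image_mset (ren_fm ?t) (\<Gamma> + image_mset (ren_fm ?t) T)) (ren_fm ?t (inst B (Fn c [])))"
    by (rule IG_ren[OF h inj_swp])
  have eG: "ren_fm ?t G = G" using d allR.hyps by (intro ren_fix_fm swp_fix) auto
  have eB: "ren_fm ?t B = B" using d allR.hyps by (intro ren_fix_fm swp_fix) auto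
  have eGa: "image_mset (ren_fm ?t) \<Gamma> = \<Gamma>" using d allR.hyps by (intro image_ren_fix swp_fix) auto
  have ei: "ren_fm ?t (inst B (Fn c [])) = inst B (Fn d [])"
    by (simp add: ren_inst eB swp_def)
  have "IGprf G Rs (\<Gamma> + T) (inst B (Fn d []))"
    using h2 by (simp add: eG eGa ei image_ren_swp_twice)
  then show ?case
    by (rule IGprf.allR[rotated 4]) (use d allR.hyps in auto)
qed (auto intro: IGprf.intros simp: add_mset_commute)

lemma IG_weak2: "IGprf G Rs S F \<Longrightarrow> S \<subseteq># S' \<Longrightarrow> IGprf G Rs S' F"
  by (metis IG_weak subset_mset.add_diff_inverse)

lemma IG_contr: "IGprf G Rs (add_mset X S) F \<Longrightarrow> X \<in># S \<Longrightarrow> ContrL \<in> Rs \<Longrightarrow> IGprf G Rs S F"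
  by (metis IGprf.contrL insert_DiffM)



abbreviation R0 :: "rule set" where "R0 \<equiv> UNIV - {AllL, ImpR}"

definition Kp :: "fm \<Rightarrow> (string \<Rightarrow> string) \<Rightarrow> fm multiset \<Rightarrow> fm \<Rightarrow> bool" where
  "Kp G p D F \<longleftrightarrow> (\<forall>A S. finite A \<longrightarrow>
     set_mset (image_mset (ren_fm p) D) - {Imp G Bot} \<subseteq> set_mset S \<longrightarrow>
     consts_ms S \<inter> A = {} \<longrightarrow>
     (\<forall>S'. S \<subseteq># S' \<longrightarrow> consts_ms S' \<inter> A = {} \<longrightarrow> IGprf G R0 S' (ren_fm p F) \<longrightarrow> IGprf G R0 S' G) \<longrightarrow>
     IGprf G R0 S G)"

lemma sub_add: "add_mset x S \<subseteq># S' \<Longrightarrow> S \<subseteq># S'"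
  by (metis add_mset_add_single mset_subset_eq_add_left subset_mset.order_trans)

lemma Kp_D:
  assumes "Kp G p \<Gamma> F" "finite A"
    "set_mset (image_mset (ren_fm p) \<Gamma>) - {Imp G Bot} \<subseteq> set_mset S"
    "consts_ms S \<inter> A = {}"
    "\<forall>S'. S \<subseteq># S' \<longrightarrow> consts_ms S' \<inter> A = {} \<longrightarrow> IGprf G R0 S' (ren_fm p F) \<longrightarrow> IGprf G R0 S' G"
  shows "IGprf G R0 S G"
proof -
  have k: "finite A \<longrightarrow> set_mset (image_mset (ren_fm p) \<Gamma>) - {Imp G Bot} \<subseteq> set_mset S \<longrightarrow>
     consts_ms S \<inter> A = {} \<longrightarrow>
     (\<forall>S'. S \<subseteq># S' \<longrightarrow> consts_ms S' \<inter> A = {} \<longrightarrow> IGprf G R0 S' (ren_fm p F) \<longrightarrow> IGprf G R0 S' G) \<longrightarrow>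
     IGprf G R0 S G"
    using spec[OF spec[OF assms(1)[unfolded Kp_def], of A], of S] .
  show ?thesis by (rule k[THEN mp, THEN mp, THEN mp, THEN mp]) (fact assms)+
qed

lemma Kp_addD:
  assumes "Kp G p (add_mset X \<Gamma>) F" "finite A"
    "set_mset (image_mset (ren_fm p) \<Gamma>) - {Imp G Bot} \<subseteq> set_mset S"
    "consts_fm (ren_fm p X) \<inter> A = {}" "consts_ms S \<inter> A = {}"
    "\<forall>S'. S \<subseteq># S' \<longrightarrow> consts_ms S' \<inter> A = {} \<longrightarrow> IGprf G R0 S' (ren_fm p F) \<longrightarrow> IGprf G R0 S' G"
  shows "IGprf G R0 (add_mset (ren_fm p X) S) G"
proof (rule Kp_D[OF assms(1,2)])
  show "\<forall>S'. add_mset (ren_fm p X) S \<subseteq># S' \<longrightarrow> consts_ms S' \<inter> A = {} \<longrightarrow> IGprf G R0 S' (ren_fm p F) \<longrightarrow> IGprf G R0 S' G"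
  proof (intro allI impI)
    fix S' assume a: "add_mset (ren_fm p X) S \<subseteq># S'" "consts_ms S' \<inter> A = {}" "IGprf G R0 S' (ren_fm p F)"
    have "S \<subseteq># S'" using a(1) by (rule sub_add)
    then show "IGprf G R0 S' G" using assms(6) a(2,3) by blast
  qed
  show "set_mset (image_mset (ren_fm p) (add_mset X \<Gamma>)) - {Imp G Bot} \<subseteq> set_mset (add_mset (ren_fm p X) S)"
    using assms(3) by (simp add: subset_iff) blast
  show "consts_ms (add_mset (ren_fm p X) S) \<inter> A = {}" using assms(4,5) by (simp add: Int_Un_distrib2)
qed

lemma memS: "X \<in># \<Gamma> \<Longrightarrow> ren_fm p X \<noteq> Imp G Bot \<Longrightarrow>
   set_mset (image_mset (ren_fm p) \<Gamma>) - {Imp G Bot} \<subseteq> set_mset S \<Longrightarrow> ren_fm p X \<in># S"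
  by auto


abbreviation Hy :: "fm \<Rightarrow> (string \<Rightarrow> string) \<Rightarrow> fm \<Rightarrow> string set \<Rightarrow> fm multiset \<Rightarrow> bool" where
  "Hy G p F A S \<equiv> \<forall>S'. S \<subseteq># S' \<longrightarrow> consts_ms S' \<inter> A = {} \<longrightarrow> IGprf G R0 S' (ren_fm p F) \<longrightarrow> IGprf G R0 S' G"

lemma KpI:
  "(\<And>A S. finite A \<Longrightarrow> set_mset (image_mset (ren_fm p) D) - {Imp G Bot} \<subseteq> set_mset S \<Longrightarrow>
     consts_ms S \<inter> A = {} \<Longrightarrow> Hy G p F A S \<Longrightarrow> IGprf G R0 S G) \<Longrightarrow> Kp G p D F"
  unfolding Kp_def by blast

lemma subG: "set_mset (image_mset f (add_mset X \<Gamma>)) - I \<subseteq> T \<Longrightarrow> set_mset (image_mset f \<Gamma>) - I \<subseteq> T"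
  by auto

lemma dj_mem: "Y \<in># S \<Longrightarrow> consts_ms S \<inter> A = {} \<Longrightarrow> consts_fm Y \<inter> A = {}"
  using consts_ms_mem by blast

lemma H_mono: "Hy G p F A S \<Longrightarrow> S \<subseteq># S1 \<Longrightarrow> Hy G p F A S1"
  using subset_mset.order_trans by blast

lemma sub_mono: "X - I \<subseteq> set_mset S \<Longrightarrow> S \<subseteq># S1 \<Longrightarrow> X - I \<subseteq> set_mset S1"
  using set_mset_mono by blast

lemma H_here: "Hy G p F A S \<Longrightarrow> consts_ms S \<inter> A = {} \<Longrightarrow> IGprf G R0 S (ren_fm p F) \<Longrightarrow> IGprf G R0 S G"
  by blast

lemma main:
  assumes "Iprf R0 D F"
  shows "\<forall>p. inj p \<longrightarrow> Kp G p D F"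
  using assms
proof (induction rule: Iprf.induct)
  case (ax \<Gamma> F)
  show ?case
  proof (intro allI impI KpI)
    fix p A S assume p: "inj p" and fA: "finite A"
      and sub: "set_mset (image_mset (ren_fm p) \<Gamma>) - {Imp G Bot} \<subseteq> set_mset S"
      and dj: "consts_ms S \<inter> A = {}" and H: "Hy G p F A S"
    have "IGprf G R0 S (ren_fm p F)"
    proof (cases "F = Top")
      case True then show ?thesis by (simp add: IGprf.ax axiom1_def)
    next
      case False
      with ax have F: "(F = Bot \<or> is_atom F) \<and> F \<in># \<Gamma>" by (simp add: axiom1_def)
      then have "ren_fm p F \<noteq> Imp G Bot" by (cases F) auto
      with F sub have "ren_fm p F \<in># S" by (intro memS) auto
      then show ?thesis using F by (intro IGprf.ax) (auto simp: axiom1_def is_atom_ren)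
    qed
    then show "IGprf G R0 S G" using H dj by (rule H_here[rotated 2])
  qed
next
  case (contrL B \<Gamma> F)
  show ?case
  proof (intro allI impI KpI)
    fix p A S assume p: "inj p" and fA: "finite A"
      and sub: "set_mset (image_mset (ren_fm p) (add_mset B \<Gamma>)) - {Imp G Bot} \<subseteq> set_mset S"
      and dj: "consts_ms S \<inter> A = {}" and H: "Hy G p F A S"
    have sub': "set_mset (image_mset (ren_fm p) (add_mset B (add_mset B \<Gamma>))) - {Imp G Bot} \<subseteq> set_mset S"
      using sub by simp
    show "IGprf G R0 S G" using contrL.IH p fA sub' dj H by (blast intro: Kp_D)
  qed
next
  case (botR \<Gamma> D)
  show ?case
  proof (intro allI impI KpI)
    fix p A S assume p: "inj p" and fA: "finite A"
      and sub: "set_mset (image_mset (ren_fm p) \<Gamma>) - {Imp G Bot} \<subseteq> set_mset S"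
      and dj: "consts_ms S \<inter> A = {}" and H: "Hy G p D A S"
    have H': "Hy G p Bot A S"
      using H by (auto intro: IGprf.botR)
    show "IGprf G R0 S G" using botR.IH p fA sub dj H' by (blast intro: Kp_D)
  qed
next
  case (andL1 B \<Gamma> F D)
  show ?case
  proof (intro allI impI KpI)
    fix p A S assume p: "inj p" and fA: "finite A"
      and sub: "set_mset (image_mset (ren_fm p) (add_mset (And B D) \<Gamma>)) - {Imp G Bot} \<subseteq> set_mset S"
      and dj: "consts_ms S \<inter> A = {}" and H: "Hy G p F A S"
    have m: "And (ren_fm p B) (ren_fm p D) \<in># S" using sub by auto
    have "IGprf G R0 (add_mset (ren_fm p B) S) G"
      by (rule Kp_addD[OF andL1.IH[rule_format, OF p] fA subG[OF sub] _ dj H])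
        (use dj_mem[OF m dj] in auto)
    then have "IGprf G R0 (add_mset (And (ren_fm p B) (ren_fm p D)) S) G" by (auto intro: IGprf.andL1)
    then show "IGprf G R0 S G" using m by (auto intro: IG_contr)
  qed
next
  case (andL2 D \<Gamma> F B)
  show ?case
  proof (intro allI impI KpI)
    fix p A S assume p: "inj p" and fA: "finite A"
      and sub: "set_mset (image_mset (ren_fm p) (add_mset (And B D) \<Gamma>)) - {Imp G Bot} \<subseteq> set_mset S"
      and dj: "consts_ms S \<inter> A = {}" and H: "Hy G p F A S"
    have m: "And (ren_fm p B) (ren_fm p D) \<in># S" using sub by auto
    have "IGprf G R0 (add_mset (ren_fm p D) S) G"
      by (rule Kp_addD[OF andL2.IH[rule_format, OF p] fA subG[OF sub] _ dj H])
        (use dj_mem[OF m dj] in auto)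
    then have "IGprf G R0 (add_mset (And (ren_fm p B) (ren_fm p D)) S) G" by (auto intro: IGprf.andL2)
    then show "IGprf G R0 S G" using m by (auto intro: IG_contr)
  qed
next
  case (orL B \<Gamma> F D)
  show ?case
  proof (intro allI impI KpI)
    fix p A S assume p: "inj p" and fA: "finite A"
      and sub: "set_mset (image_mset (ren_fm p) (add_mset (Or B D) \<Gamma>)) - {Imp G Bot} \<subseteq> set_mset S"
      and dj: "consts_ms S \<inter> A = {}" and H: "Hy G p F A S"
    have m: "Or (ren_fm p B) (ren_fm p D) \<in># S" using sub by auto
    have 1: "IGprf G R0 (add_mset (ren_fm p B) S) G"
      by (rule Kp_addD[OF orL.IH(1)[rule_format, OF p] fA subG[OF sub] _ dj H])
        (use dj_mem[OF m dj] in auto)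
    have 2: "IGprf G R0 (add_mset (ren_fm p D) S) G"
      by (rule Kp_addD[OF orL.IH(2)[rule_format, OF p] fA subG[OF sub] _ dj H])
        (use dj_mem[OF m dj] in auto)
    have "IGprf G R0 (add_mset (Or (ren_fm p B) (ren_fm p D)) S) G"
      using 1 2 by (auto intro: IGprf.orLG)
    then show "IGprf G R0 S G" using m by (auto intro: IG_contr)
  qed
next
  case (andR \<Gamma> B D)
  show ?case
  proof (intro allI impI KpI)
    fix p A S assume p: "inj p" and fA: "finite A"
      and sub: "set_mset (image_mset (ren_fm p) \<Gamma>) - {Imp G Bot} \<subseteq> set_mset S"
      and dj: "consts_ms S \<inter> A = {}" and H: "Hy G p (And B D) A S"
    have "Hy G p B A S"
    proof (intro allI impI)
      fix S1 assume s1: "S \<subseteq># S1" and dj1: "consts_ms S1 \<inter> A = {}" and pB: "IGprf G R0 S1 (ren_fm p B)"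
      have "Hy G p D A S1"
      proof (intro allI impI)
        fix S2 assume s2: "S1 \<subseteq># S2" and dj2: "consts_ms S2 \<inter> A = {}" and pD: "IGprf G R0 S2 (ren_fm p D)"
        have "IGprf G R0 S2 (ren_fm p B)" using IG_weak2[OF pB s2] .
        then have "IGprf G R0 S2 (ren_fm p (And B D))" using pD by (auto intro: IGprf.andR)
        moreover have "S \<subseteq># S2" using s1 s2 by simp
        ultimately show "IGprf G R0 S2 G" using H dj2 by blast
      qed
      then show "IGprf G R0 S1 G"
        using Kp_D[OF andR.IH(2)[rule_format, OF p] fA sub_mono[OF sub s1] dj1] by blast
    qed
    then show "IGprf G R0 S G" using Kp_D[OF andR.IH(1)[rule_format, OF p] fA sub dj] by blast
  qed
next
  case (orR1 \<Gamma> B D)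
  show ?case
  proof (intro allI impI KpI)
    fix p A S assume p: "inj p" and fA: "finite A"
      and sub: "set_mset (image_mset (ren_fm p) \<Gamma>) - {Imp G Bot} \<subseteq> set_mset S"
      and dj: "consts_ms S \<inter> A = {}" and H: "Hy G p (Or B D) A S"
    have H': "Hy G p B A S"
      using H by (auto intro: IGprf.orR1)
    show "IGprf G R0 S G" using orR1.IH p fA sub dj H' by (blast intro: Kp_D)
  qed
next
  case (orR2 \<Gamma> D B)
  show ?case
  proof (intro allI impI KpI)
    fix p A S assume p: "inj p" and fA: "finite A"
      and sub: "set_mset (image_mset (ren_fm p) \<Gamma>) - {Imp G Bot} \<subseteq> set_mset S"
      and dj: "consts_ms S \<inter> A = {}" and H: "Hy G p (Or B D) A S"
    have H': "Hy G p D A S"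
      using H by (auto intro: IGprf.orR2)
    show "IGprf G R0 S G" using orR2.IH p fA sub dj H' by (blast intro: Kp_D)
  qed
next
  case (exR \<Gamma> B t)
  show ?case
  proof (intro allI impI KpI)
    fix p A S assume p: "inj p" and fA: "finite A"
      and sub: "set_mset (image_mset (ren_fm p) \<Gamma>) - {Imp G Bot} \<subseteq> set_mset S"
      and dj: "consts_ms S \<inter> A = {}" and H: "Hy G p (Ex B) A S"
    have H': "Hy G p (inst B t) A S"
      using H by (auto intro: IGprf.exR simp: ren_inst)
    show "IGprf G R0 S G" using exR.IH p fA sub dj H' by (blast intro: Kp_D)
  qed
next
  case (impL \<Gamma> B D E)
  show ?case
  proof (intro allI impI KpI)
    fix p A S assume p: "inj p" and fA: "finite A"
      and sub: "set_mset (image_mset (ren_fm p) (add_mset (Imp B D) \<Gamma>)) - {Imp G Bot} \<subseteq> set_mset S"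
      and dj: "consts_ms S \<inter> A = {}" and H: "Hy G p E A S"
    show "IGprf G R0 S G"
    proof (cases "ren_fm p (Imp B D) = Imp G Bot")
      case True
      then have "ren_fm p B = G" by simp
      then have "Hy G p B A S" by simp
      then show ?thesis using Kp_D[OF impL.IH(1)[rule_format, OF p] fA subG[OF sub] dj] by blast
    next
      case False
      then have m: "Imp (ren_fm p B) (ren_fm p D) \<in># S" using sub by auto
      have "Hy G p B A S"
      proof (intro allI impI)
        fix S1 assume s1: "S \<subseteq># S1" and dj1: "consts_ms S1 \<inter> A = {}" and pB: "IGprf G R0 S1 (ren_fm p B)"
        have m1: "Imp (ren_fm p B) (ren_fm p D) \<in># S1" using mset_subset_eqD[OF s1 m] .
        have "IGprf G R0 (add_mset (ren_fm p D) S1) G"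
          by (rule Kp_addD[OF impL.IH(2)[rule_format, OF p] fA sub_mono[OF subG[OF sub] s1] _ dj1 H_mono[OF H s1]])
            (use dj_mem[OF m1 dj1] in auto)
        then have "IGprf G R0 (add_mset (Imp (ren_fm p B) (ren_fm p D)) S1) G"
          using pB by (auto intro: IGprf.impL)
        then show "IGprf G R0 S1 G" using m1 by (auto intro: IG_contr)
      qed
      then show ?thesis using Kp_D[OF impL.IH(1)[rule_format, OF p] fA subG[OF sub] dj] by blast
    qed
  qed
next
  case (exL c B \<Gamma> F)
  show ?case
  proof (intro allI impI KpI)
    fix p A S assume p: "inj p" and fA: "finite A"
      and sub: "set_mset (image_mset (ren_fm p) (add_mset (Ex B) \<Gamma>)) - {Imp G Bot} \<subseteq> set_mset S"
      and dj: "consts_ms S \<inter> A = {}" and H: "Hy G p F A S"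
    have m: "Ex (ren_fm p B) \<in># S" using sub by auto
    obtain d where d: "d \<notin> consts_ms S \<union> consts_fm G \<union> consts_fm (ren_fm p F) \<union> A"
      using fresh[of "consts_ms S \<union> consts_fm G \<union> consts_fm (ren_fm p F) \<union> A"] fA
      by (auto simp: finite_consts_ms finite_consts_fm)
    define q where "q = swp (p c) d \<circ> p"
    have q: "inj q" unfolding q_def by (rule inj_compose[OF inj_swp p])
    have agr: "q x = p x" if x: "x \<in> consts_ms (add_mset (Ex B) \<Gamma>) \<union> consts_fm F" for x
    proof -
      have xc: "x \<noteq> c" using x exL.hyps by auto
      have "p x \<in> consts_ms S \<union> consts_fm G \<union> consts_fm (ren_fm p F)"
      proof (cases "x \<in> consts_fm F")
        case True then show ?thesis by (simp add: consts_ren_fm)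
      next
        case False
        then have "x \<in> consts_ms (add_mset (Ex B) \<Gamma>)" using x by blast
        then obtain Y where Y: "Y \<in># add_mset (Ex B) \<Gamma>" "x \<in> consts_fm Y"
          unfolding consts_ms_def by blast
        have px: "p x \<in> consts_fm (ren_fm p Y)" using Y(2) by (simp add: consts_ren_fm)
        show ?thesis
        proof (cases "ren_fm p Y = Imp G Bot")
          case True then show ?thesis using px by simp
        next
          case False
          then have "ren_fm p Y \<in># S" using Y(1) sub by auto
          then show ?thesis using px consts_ms_mem by blast
        qed
      qed
      then have "p x \<noteq> d" using d by blast
      moreover have "p x \<noteq> p c" using xc p by (simp add: inj_eq)
      ultimately show ?thesis by (simp add: q_def swp_def)
    qed
    have eG: "image_mset (ren_fm q) \<Gamma> = image_mset (ren_fm p) \<Gamma>"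
      by (rule image_mset_cong, rule ren_cong_fm, rule agr) (auto simp: consts_ms_def)
    have eB: "ren_fm q B = ren_fm p B"
      by (rule ren_cong_fm, rule agr) auto
    have eF: "ren_fm q F = ren_fm p F"
      by (rule ren_cong_fm, rule agr) auto
    have qc: "q c = d" by (simp add: q_def swp_def)
    have ei: "ren_fm q (inst B (Fn c [])) = inst (ren_fm p B) (Fn d [])"
      by (simp add: ren_inst eB qc)
    have sub': "set_mset (image_mset (ren_fm q) \<Gamma>) - {Imp G Bot} \<subseteq> set_mset S"
      using subG[OF sub] eG by simp
    have cB: "consts_fm (ren_fm p B) \<subseteq> consts_ms S" using consts_ms_mem[OF m] by simp
    have cd: "consts_fm (ren_fm q (inst B (Fn c []))) \<inter> A = {}"
      using consts_inst[of "ren_fm p B" "Fn d []"] cB dj d unfolding ei by auto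
    have H': "Hy G q F A S" using H eF by simp
    have "IGprf G R0 (add_mset (ren_fm q (inst B (Fn c []))) S) G"
      by (rule Kp_addD[OF exL.IH[rule_format, OF q] fA sub' cd dj H'])
    then have 1: "IGprf G R0 (add_mset (inst (ren_fm p B) (Fn d [])) S) G" by (simp add: ei)
    have "IGprf G R0 (add_mset (Ex (ren_fm p B)) S) G"
      by (rule IGprf.exL[OF _ _ _ _ 1]) (use d cB in auto)
    then show "IGprf G R0 S G" using m by (auto intro: IG_contr)
  qed
next
  case (allR c \<Gamma> B)
  show ?case
  proof (intro allI impI KpI)
    fix p A S assume p: "inj p" and fA: "finite A"
      and sub: "set_mset (image_mset (ren_fm p) \<Gamma>) - {Imp G Bot} \<subseteq> set_mset S"
      and dj: "consts_ms S \<inter> A = {}" and H: "Hy G p (All B) A S"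
    obtain d where d: "d \<notin> consts_ms S \<union> consts_fm G \<union> consts_fm (ren_fm p B) \<union> A"
      using fresh[of "consts_ms S \<union> consts_fm G \<union> consts_fm (ren_fm p B) \<union> A"] fA
      by (auto simp: finite_consts_ms finite_consts_fm)
    define q where "q = swp (p c) d \<circ> p"
    have q: "inj q" unfolding q_def by (rule inj_compose[OF inj_swp p])
    have agr: "q x = p x" if x: "x \<in> consts_ms \<Gamma> \<union> consts_fm B" for x
    proof -
      have xc: "x \<noteq> c" using x allR.hyps by auto
      have "p x \<in> consts_ms S \<union> consts_fm G \<union> consts_fm (ren_fm p B)"
      proof (cases "x \<in> consts_fm B")
        case True then show ?thesis by (simp add: consts_ren_fm)
      next
        case False
        then obtain Y where Y: "Y \<in># \<Gamma>" "x \<in> consts_fm Y"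
          using x by (auto simp: consts_ms_def)
        have px: "p x \<in> consts_fm (ren_fm p Y)" using Y(2) by (simp add: consts_ren_fm)
        show ?thesis
        proof (cases "ren_fm p Y = Imp G Bot")
          case True then show ?thesis using px by simp
        next
          case False
          then have "ren_fm p Y \<in># S" using Y(1) sub by auto
          then show ?thesis using px consts_ms_mem by blast
        qed
      qed
      then have "p x \<noteq> d" using d by blast
      moreover have "p x \<noteq> p c" using xc p by (simp add: inj_eq)
      ultimately show ?thesis by (simp add: q_def swp_def)
    qed
    have eG: "image_mset (ren_fm q) \<Gamma> = image_mset (ren_fm p) \<Gamma>"
      by (rule image_mset_cong, rule ren_cong_fm, rule agr) (auto simp: consts_ms_def)
    have eB: "ren_fm q B = ren_fm p B"
      by (rule ren_cong_fm, rule agr) auto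
    have qc: "q c = d" by (simp add: q_def swp_def)
    have ei: "ren_fm q (inst B (Fn c [])) = inst (ren_fm p B) (Fn d [])"
      by (simp add: ren_inst eB qc)
    have sub': "set_mset (image_mset (ren_fm q) \<Gamma>) - {Imp G Bot} \<subseteq> set_mset S"
      using sub eG by simp
    have fA': "finite (insert d A)" using fA by simp
    have dj': "consts_ms S \<inter> insert d A = {}" using dj d by auto
    have H': "Hy G q (inst B (Fn c [])) (insert d A) S"
    proof (intro allI impI)
      fix S1 assume s1: "S \<subseteq># S1" and dj1: "consts_ms S1 \<inter> insert d A = {}"
        and pB: "IGprf G R0 S1 (ren_fm q (inst B (Fn c [])))"
      have "IGprf G R0 S1 (All (ren_fm p B))"
        by (rule IGprf.allR[of _ d]) (use pB ei dj1 d in auto)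
      then have "IGprf G R0 S1 (ren_fm p (All B))" by simp
      moreover have "consts_ms S1 \<inter> A = {}" using dj1 by auto
      ultimately show "IGprf G R0 S1 G" using H s1 by blast
    qed
    show "IGprf G R0 S G" by (rule Kp_D[OF allR.IH[rule_format, OF q] fA' sub' dj' H'])
  qed
next
  case (allL B t \<Gamma> F)
  then show ?case by simp
next
  case (impR B \<Gamma> D)
  then show ?case by simp
qed


theorem lemma4:
  fixes \<Gamma> :: "fm multiset" and G :: fm
  assumes "Iprf (UNIV - {AllL, ImpR}) (add_mset (Imp G Bot) \<Gamma>) G"
  shows "IGprf G (UNIV - {AllL, ImpR}) \<Gamma> G"
proof -
  have "inj (\<lambda>x::string. x)" by (simp add: inj_on_def)
  then have K: "Kp G (\<lambda>x. x) (add_mset (Imp G Bot) \<Gamma>) G"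
    using main[OF assms] by blast
  have sub: "set_mset (image_mset (ren_fm (\<lambda>x. x)) (add_mset (Imp G Bot) \<Gamma>)) - {Imp G Bot} \<subseteq> set_mset \<Gamma>"
    by (auto simp: ren_id_fm)
  have H: "Hy G (\<lambda>x. x) G {} \<Gamma>" by (simp add: ren_id_fm)
  show ?thesis by (rule Kp_D[OF K _ sub _ H]) auto
qed

end
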